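(* Let $\mathcal{N}=\{1,\dots,N\}$ be a finite set of players and let $v:2^{\mathcal{N}}\to\mathbb{R}$ be any real-valued set function (the coalition value, with $v(\emptyset)=0$). For a coalition $\mathcal{S}\subseteq\mathcal{N}$ and a player $i\in\mathcal{S}$, let the payoff $x_i(\mathcal{S})$ be the Shapley value of $i$ in the game $v$ restricted to $\mathcal{S}$: $$x_i(\mathcal{S})=\sum_{\mathcal{T}\subseteq \mathcal{S}\setminus\{i\}}\frac{|\mathcal{T}|!\,(|\mathcal{S}|-|\mathcal{T}|-1)!}{|\mathcal{S}|!}\bigl(v(\mathcal{T}\cup\{i\})-v(\mathcal{T})\bigr).$$ Consider the hedonic shift process with histories defined in the context below, started from an arbitrary initial partition $\Pi_0$ of $\mathcal{N}$ with all histories empty. Then every sequence of moves of this process is finite; i.e., the process always reaches, after finitely many moves, a final partition $\Pi_f$ at which no player has an admissible move.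
   Context: A coalition partition of $\mathcal{N}$ is a set $\Pi=\{\mathcal{S}_1,\dots,\mathcal{S}_l\}$ of nonempty pairwise disjoint subsets of $\mathcal{N}$ whose union is $\mathcal{N}$; $\mathcal{S}_\Pi(i)$ denotes the member of $\Pi$ containing $i$. Hedonic shift process with histories: the state is a pair $(\Pi,(h(i))_{i\in\mathcal{N}})$ where $\Pi$ is a coalition partition and each history $h(i)$ is a set of subsets of $\mathcal{N}\setminus\{i\}$; initially every $h(i)=\emptyset$. A move is performed by a single player $i$ as follows. Let $\mathcal{S}_{\mathrm{cur}}=\mathcal{S}_\Pi(i)$. The eligible targets are the sets $\mathcal{T}\in(\Pi\setminus\{\mathcal{S}_{\mathrm{cur}}\})\cup\{\emptyset\}$ with $\mathcal{T}\notin h(i)$. Player $i$ has an admissible move if some eligible $\mathcal{T}$ satisfies $x_i(\mathcal{T}\cup\{i\})>x_i(\mathcal{S}_{\mathrm{cur}})$; in that case $i$ chooses an eligible $\mathcal{T}$ maximizing $x_i(\mathcal{T}\cup\{i\})$ (ties broken arbitrarily), the partition becomes $(\Pi\setminus\{\mathcal{S}_{\mathrm{cur}},\mathcal{T}\})\cup\{\mathcal{S}_{\mathrm{cur}}\setminus\{i\},\mathcal{T}\cup\{i\}\}$ (with the empty set discarded if $\mathcal{S}_{\mathrm{cur}}\setminus\{i\}=\emptyset$), and $h(i)$ is replaced by $h(i)\cup\{\mathcal{S}_{\mathrm{cur}}\setminus\{i\}\}$; all other histories are unchanged. Moves may be performed by players in any order (asynchronously), one at a time. *)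

theory Defs
  imports Complex_Main "HOL-Library.Disjoint_Sets"
begin

definition shapley_payoff :: "('a set \<Rightarrow> real) \<Rightarrow> 'a \<Rightarrow> 'a set \<Rightarrow> real" where
  "shapley_payoff v i S =
     (\<Sum>T\<in>Pow (S - {i}).
        (fact (card T) * fact (card S - card T - 1) / fact (card S)) * (v (insert i T) - v T))"

definition cell :: "'a set set \<Rightarrow> 'a \<Rightarrow> 'a set" where
  "cell P i = (THE S. S \<in> P \<and> i \<in> S)"

type_synonym 'a hstate = "'a set set \<times> ('a \<Rightarrow> 'a set set)"

definition eligible :: "'a set set \<Rightarrow> ('a \<Rightarrow> 'a set set) \<Rightarrow> 'a \<Rightarrow> 'a set set" where
  "eligible P h i = {T. T \<in> (P - {cell P i}) \<union> {{}} \<and> T \<notin> h i}"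

definition hedonic_move :: "'a set \<Rightarrow> ('a set \<Rightarrow> real) \<Rightarrow> 'a hstate \<Rightarrow> 'a hstate \<Rightarrow> bool" where
  "hedonic_move Ns v st st' \<longleftrightarrow>
     (\<exists>i\<in>Ns. \<exists>T\<in>eligible (fst st) (snd st) i.
        let P = fst st; h = snd st; Scur = cell P i; x = shapley_payoff v i in
        (\<exists>T'\<in>eligible P h i. x (insert i T') > x Scur) \<and>
        (\<forall>T'\<in>eligible P h i. x (insert i T') \<le> x (insert i T)) \<and>
        fst st' = ((P - {Scur, T}) \<union> {Scur - {i}, insert i T}) - {{}} \<and>
        snd st' = h(i := h i \<union> {Scur - {i}}))"

end

theory Submission
  imports Defs
begin

definition pot :: "('a set \<Rightarrow> real) \<Rightarrow> 'a set \<Rightarrow> real" where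
  "pot v S = (\<Sum>U\<in>Pow S. (fact (card U - 1) * fact (card S - card U) / fact (card S)) * v U)"

lemma fact_id:
  fixes a b :: nat
  shows "(fact a * fact (b+1) / fact (a+b+2) - fact a * fact b / fact (a+b+1) :: real)
     = - (fact (a+1) * fact b / fact (a+b+2))"
proof -
  have e1: "(fact (a+b+2)::real) = (real a+b+2) * fact (a+b+1)"
    using fact_Suc[of "a+b+1"] by (simp add: algebra_simps)
  have e2: "(fact (b+1)::real) = (real b+1) * fact b" by simp
  have e3: "(fact (a+1)::real) = (real a+1) * fact a" by simp
  define F where "F = (fact (a+b+1)::real)"
  define fa where "fa = (fact a::real)"
  define fb where "fb = (fact b::real)"
  define x where "x = real a"
  define y where "y = real b"
  have p: "F > 0" unfolding F_def by simp
  have q: "x + y + 2 > 0" unfolding x_def y_def by simp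
  have "fa * ((y+1) * fb) / ((x+y+2) * F) - fa * fb / F = - ((x+1) * fa * fb / ((x+y+2)*F))"
  proof -
    have F0: "F \<noteq> 0" and q0: "x+y+2 \<noteq> 0" using p q by auto
    have "fa * fb / F = (x+y+2) * fa * fb / ((x+y+2) * F)" using q0 by simp
    then have "fa * ((y+1) * fb) / ((x+y+2) * F) - fa * fb / F
       = (fa * ((y+1) * fb) - (x+y+2) * fa * fb) / ((x+y+2) * F)"
      by (simp add: diff_divide_distrib)
    also have "fa * ((y+1) * fb) - (x+y+2) * fa * fb = - ((x+1) * fa * fb)"
      by (simp add: algebra_simps)
    finally show ?thesis by simp
  qed
  then show ?thesis unfolding e1 e2 e3 F_def[symmetric] fa_def[symmetric] fb_def[symmetric]
     x_def[symmetric] y_def[symmetric] by (simp add: algebra_simps)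
qed

lemma shap_pot:
  assumes "finite S" "i \<in> S" "v {} = 0"
  shows "shapley_payoff v i S = pot v S - pot v (S - {i})"
proof -
  let ?R = "S - {i}"
  let ?s = "card S"
  have fR: "finite ?R" using assms by simp
  have cS0: "?s > 0" using assms card_gt_0_iff by blast
  have cS: "?s = card ?R + 1" using assms cS0 by simp
  have PowS: "Pow S = Pow ?R \<union> insert i ` Pow ?R"
    using assms(2) by (metis Pow_insert insert_Diff)
  have disj: "Pow ?R \<inter> insert i ` Pow ?R = {}" by auto
  have inj: "inj_on (insert i) (Pow ?R)" by (rule inj_onI) blast
  define d where "d = (\<lambda>U s. (fact (card U - 1) * fact (s - card U) / fact s) * v U :: real)"
  have "pot v S = (\<Sum>U\<in>Pow ?R. d U ?s) + (\<Sum>U\<in>insert i ` Pow ?R. d U ?s)"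
    unfolding pot_def d_def PowS using fR disj by (simp add: sum.union_disjoint)
  also have "(\<Sum>U\<in>insert i ` Pow ?R. d U ?s) = (\<Sum>T\<in>Pow ?R. d (insert i T) ?s)"
    using inj by (simp add: sum.reindex)
  finally have potS: "pot v S = (\<Sum>T\<in>Pow ?R. d T ?s + d (insert i T) ?s)"
    by (simp add: sum.distrib)
  have potR: "pot v ?R = (\<Sum>T\<in>Pow ?R. d T (?s - 1))"
    unfolding pot_def d_def using cS by simp
  have "shapley_payoff v i S = (\<Sum>T\<in>Pow ?R. d T ?s + d (insert i T) ?s - d T (?s - 1))"
    unfolding shapley_payoff_def
  proof (rule sum.cong[OF refl])
    fix T assume T: "T \<in> Pow ?R"
    have fT: "finite T" using T fR finite_subset by auto
    have iT: "i \<notin> T" using T by auto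
    have ct: "card T \<le> card ?R" using T fR by (simp add: card_mono)
    have ins: "card (insert i T) = card T + 1" using fT iT by simp
    obtain b where b: "card ?R = card T + b" using ct le_Suc_ex by blast
    show "fact (card T) * fact (?s - card T - 1) / fact ?s * (v (insert i T) - v T)
        = d T ?s + d (insert i T) ?s - d T (?s - 1)"
    proof (cases "T = {}")
      case True
      then show ?thesis using assms(3) cS by (simp add: d_def)
    next
      case False
      then obtain a where a: "card T = a + 1" using fT
        by (metis Suc_eq_plus1 card_0_eq not0_implies_Suc)
      have s: "?s = a + b + 2" using cS b a by simp
      have n1: "a + b + 2 - (a + 1) - 1 = b" "a + b + 2 - (a + 1) = b + 1" "a + 1 + 1 - 1 = a + 1"
        "a + b + 2 - (a + 1 + 1) = b" "a + b + 2 - 1 = a + b + 1" "a + b + 1 - (a + 1) = b" "a + 1 - 1 = a"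
        by simp_all
      define A where "A = (fact a * fact (b+1) / fact (a+b+2) :: real)"
      define B where "B = (fact a * fact b / fact (a+b+1) :: real)"
      define K where "K = (fact (a+1) * fact b / fact (a+b+2) :: real)"
      have AB: "A - B = - K" using fact_id[of a b] unfolding A_def B_def K_def .
      have "d T ?s + d (insert i T) ?s - d T (?s - 1) = A * v T + K * v (insert i T) - B * v T"
        unfolding d_def ins a s n1 A_def B_def K_def by simp
      also have "\<dots> = K * (v (insert i T) - v T)"
      proof -
        have "A * v T + K * v (insert i T) - B * v T = (A - B) * v T + K * v (insert i T)"
          by (simp add: algebra_simps)
        then show ?thesis unfolding AB by (simp add: algebra_simps)
      qed
      finally show ?thesis unfolding a s n1 K_def by simp
    qed
  qed
  also have "\<dots> = pot v S - pot v ?R"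
    unfolding potS potR by (simp add: sum_subtractf)
  finally show ?thesis .
qed

lemma pot_empty: "v {} = 0 \<Longrightarrow> pot v {} = 0"
  unfolding pot_def by simp

lemma cell_props:
  assumes "partition_on Ns P" "i \<in> Ns"
  shows "cell P i \<in> P \<and> i \<in> cell P i"
proof -
  have "i \<in> \<Union>P" using partition_onD1[OF assms(1)] assms(2) by simp
  then obtain S where S: "S \<in> P" "i \<in> S" by blast
  have dj: "\<And>a b. a \<in> P \<Longrightarrow> b \<in> P \<Longrightarrow> a \<noteq> b \<Longrightarrow> a \<inter> b = {}"
    using partition_onD2[OF assms(1)] unfolding disjoint_def by blast
  have u: "S' = S" if "S' \<in> P \<and> i \<in> S'" for S'
  proof (rule ccontr)
    assume "S' \<noteq> S"
    then have "S' \<inter> S = {}" using dj that S by simp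
    then show False using that S by auto
  qed
  have "cell P i = S" unfolding cell_def
    using S u by (intro the_equality) blast+
  then show ?thesis using S by simp
qed

lemma disj_aux:
  fixes p q A B C T :: "'a set" and P X :: "'a set set"
  assumes cl: "\<And>r. r \<in> X \<Longrightarrow> (r \<in> P \<and> r \<noteq> C \<and> r \<noteq> T) \<or> r = A \<or> r = B"
  and p: "p \<in> X" and q: "q \<in> X" and pq: "p \<noteq> q"
  and D: "\<And>a b. a \<in> P \<Longrightarrow> b \<in> P \<Longrightarrow> a \<noteq> b \<Longrightarrow> a \<inter> b = {}"
  and dQA: "\<And>r. r \<in> P \<Longrightarrow> r \<noteq> C \<Longrightarrow> r \<inter> A = {}"
  and dQB: "\<And>r. r \<in> P \<Longrightarrow> r \<noteq> C \<Longrightarrow> r \<noteq> T \<Longrightarrow> r \<inter> B = {}"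
  and dAB: "A \<inter> B = {}"
  shows "p \<inter> q = {}"
proof -
  have dBA: "B \<inter> A = {}" using dAB by blast
  have dQA': "\<And>r. r \<in> P \<Longrightarrow> r \<noteq> C \<Longrightarrow> A \<inter> r = {}" using dQA by blast
  have dQB': "\<And>r. r \<in> P \<Longrightarrow> r \<noteq> C \<Longrightarrow> r \<noteq> T \<Longrightarrow> B \<inter> r = {}" using dQB by blast
  from cl[OF p] cl[OF q] show ?thesis
  proof (elim disjE conjE)
  qed (use pq D dQA dQB dAB dBA dQA' dQB' in metis)+
qed

definition Phi :: "('a set \<Rightarrow> real) \<Rightarrow> 'a set set \<Rightarrow> real" where
  "Phi v P = (\<Sum>S\<in>P. pot v S)"

lemma step:
  assumes fin: "finite Ns" and v0: "v {} = 0" and part: "partition_on Ns (fst st)"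
    and mv: "hedonic_move Ns v st st'"
  shows "partition_on Ns (fst st') \<and> Phi v (fst st) < Phi v (fst st')"
proof -
  obtain P h where st: "st = (P, h)" by (cases st)
  define x where "x = (\<lambda>i. shapley_payoff v i)"
  have ex: "\<exists>i\<in>Ns. \<exists>T\<in>eligible P h i.
        (\<exists>T'\<in>eligible P h i. x i (insert i T') > x i (cell P i)) \<and>
        (\<forall>T'\<in>eligible P h i. x i (insert i T') \<le> x i (insert i T)) \<and>
        fst st' = ((P - {cell P i, T}) \<union> {cell P i - {i}, insert i T}) - {{}} \<and>
        snd st' = h(i := h i \<union> {cell P i - {i}})"
    using mv unfolding hedonic_move_def st Let_def fst_conv snd_conv x_def .
  from ex obtain i where iN: "i \<in> Ns" and ex2: "\<exists>T\<in>eligible P h i.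
        (\<exists>T'\<in>eligible P h i. x i (insert i T') > x i (cell P i)) \<and>
        (\<forall>T'\<in>eligible P h i. x i (insert i T') \<le> x i (insert i T)) \<and>
        fst st' = ((P - {cell P i, T}) \<union> {cell P i - {i}, insert i T}) - {{}} \<and>
        snd st' = h(i := h i \<union> {cell P i - {i}})" ..
  from ex2 obtain T where Tel: "T \<in> eligible P h i" and body:
        "(\<exists>T'\<in>eligible P h i. x i (insert i T') > x i (cell P i)) \<and>
        (\<forall>T'\<in>eligible P h i. x i (insert i T') \<le> x i (insert i T)) \<and>
        fst st' = ((P - {cell P i, T}) \<union> {cell P i - {i}, insert i T}) - {{}} \<and>
        snd st' = h(i := h i \<union> {cell P i - {i}})" ..
  have imp: "\<exists>T'\<in>eligible P h i. shapley_payoff v i (insert i T') > shapley_payoff v i (cell P i)"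
    using conjunct1[OF body] unfolding x_def .
  have mx: "\<forall>T'\<in>eligible P h i. shapley_payoff v i (insert i T') \<le> shapley_payoff v i (insert i T)"
    using conjunct1[OF conjunct2[OF body]] unfolding x_def .
  have P': "fst st' = ((P - {cell P i, T}) \<union> {cell P i - {i}, insert i T}) - {{}}"
    using conjunct1[OF conjunct2[OF conjunct2[OF body]]] .
  define C where "C = cell P i"
  have partP: "partition_on Ns P" using part st by simp
  have C: "C \<in> P" "i \<in> C" using cell_props[OF partP iN] C_def by auto
  have U: "\<Union>P = Ns" using partition_onD1[OF partP] by simp
  have D: "\<And>a b. a \<in> P \<Longrightarrow> b \<in> P \<Longrightarrow> a \<noteq> b \<Longrightarrow> a \<inter> b = {}"
    using partition_onD2[OF partP] unfolding disjoint_def by blast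
  have E: "{} \<notin> P" using partition_onD3[OF partP] .
  have T: "T = {} \<or> (T \<in> P \<and> T \<noteq> C)" using Tel unfolding eligible_def C_def by auto
  have iT: "i \<notin> T" using T C D by blast
  have TC: "T \<inter> C = {}" using T C D by blast
  have gain: "shapley_payoff v i (insert i T) > shapley_payoff v i C"
  proof -
    from imp obtain T' where T'el: "T' \<in> eligible P h i"
      and g1: "shapley_payoff v i (insert i T') > shapley_payoff v i C" unfolding C_def ..
    have "shapley_payoff v i (insert i T') \<le> shapley_payoff v i (insert i T)" using mx T'el by blast
    then show ?thesis using g1 by linarith
  qed
  define Q where "Q = P - {C, T}"
  define A where "A = C - {i}"
  define B where "B = insert i T"
  have P'': "fst st' = (Q \<union> {A, B}) - {{}}" using P' unfolding Q_def A_def B_def C_def .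
  have finP: "finite P" using finite_elements[OF fin partP] .
  have finQ: "finite Q" using finP Q_def by simp
  have CN: "C \<subseteq> Ns" using C U by blast
  have TN: "T \<subseteq> Ns" using T U by blast
  have finC: "finite C" using CN fin finite_subset by blast
  have finB: "finite B" using TN fin finite_subset B_def by blast
  have AQ: "A \<notin> Q"
  proof
    assume "A \<in> Q"
    then have "A \<in> P" "A \<noteq> C" using Q_def by auto
    then have "A \<inter> C = {}" using D C by blast
    then have "A = {}" using A_def by blast
    then show False using \<open>A \<in> P\<close> E by simp
  qed
  have BQ: "B \<notin> Q"
  proof
    assume "B \<in> Q"
    then have "B \<in> P" "B \<noteq> C" using Q_def by auto
    then have "B \<inter> C = {}" using D C by blast
    then show False using C B_def by blast
  qed
  have AB: "A \<noteq> B" using A_def B_def by blast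
  have newpart: "partition_on Ns (fst st')"
  proof (rule partition_onI)
    show "\<Union>(fst st') = Ns"
    proof
      show "\<Union>(fst st') \<subseteq> Ns" unfolding P'' Q_def A_def B_def using U C CN TN by auto
      show "Ns \<subseteq> \<Union>(fst st')"
      proof
        fix x assume "x \<in> Ns"
        then obtain S where S: "S \<in> P" "x \<in> S" using U by blast
        show "x \<in> \<Union>(fst st')"
        proof (cases "S = C \<or> S = T")
          case True
          then have "x \<in> A \<or> x \<in> B" using S A_def B_def by blast
          then show ?thesis unfolding P'' by blast
        next
          case False
          then have "S \<in> Q" using S Q_def by auto
          then show ?thesis unfolding P'' using S by blast
        qed
      qed
    qed
    show "{} \<notin> fst st'" unfolding P'' by simp
    fix p q assume p: "p \<in> fst st'" and q: "q \<in> fst st'" and pq: "p \<noteq> q"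
    have cl: "\<And>r. r \<in> fst st' \<Longrightarrow> (r \<in> P \<and> r \<noteq> C \<and> r \<noteq> T) \<or> r = A \<or> r = B"
      unfolding P'' Q_def by blast
    have dQA: "\<And>r. r \<in> P \<Longrightarrow> r \<noteq> C \<Longrightarrow> r \<inter> A = {}" using D C A_def by blast
    have dQB: "\<And>r. r \<in> P \<Longrightarrow> r \<noteq> C \<Longrightarrow> r \<noteq> T \<Longrightarrow> r \<inter> B = {}"
      using D C T B_def by blast
    have dAB: "A \<inter> B = {}" using A_def B_def TC by blast
    show "disjnt p q" unfolding disjnt_def
      by (rule disj_aux[OF cl p q pq D dQA dQB dAB])
  qed
  have s1: "Phi v (fst st') = sum (pot v) Q + pot v A + pot v B"
  proof -
    have "Phi v (fst st') = sum (pot v) (Q \<union> {A, B})"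
      unfolding Phi_def P'' using finQ pot_empty[of v, OF v0] by (simp add: sum_diff1)
    also have "Q \<union> {A, B} = insert A (insert B Q)" by auto
    also have "sum (pot v) \<dots> = sum (pot v) Q + pot v A + pot v B"
      using finQ AQ BQ AB by (simp add: algebra_simps)
    finally show ?thesis .
  qed
  have s2: "Phi v P = sum (pot v) Q + pot v C + pot v T"
  proof -
    have "Phi v P = sum (pot v) (insert T P)"
      unfolding Phi_def using finP T pot_empty[of v, OF v0] by (auto simp: sum.insert_if)
    also have "insert T P = insert C (insert T Q)" using Q_def C by auto
    also have "sum (pot v) \<dots> = sum (pot v) Q + pot v C + pot v T"
    proof -
      have n1: "C \<notin> insert T Q" "T \<notin> Q" using Q_def iT C by auto
      show ?thesis using finQ n1 by (simp add: algebra_simps)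
    qed
    finally show ?thesis .
  qed
  have x1: "shapley_payoff v i C = pot v C - pot v A"
    using shap_pot[of C i v, OF finC C(2) v0] A_def by simp
  have x2: "shapley_payoff v i B = pot v B - pot v T"
    using shap_pot[of B i v, OF finB _ v0] B_def iT by simp
  have "Phi v P < Phi v (fst st')"
    using s1 s2 x1 x2 gain B_def by simp
  then show ?thesis using newpart st by simp
qed

theorem proposition1:
  fixes Ns :: "'a set" and v :: "'a set \<Rightarrow> real" and P0 :: "'a set set"
  assumes "finite Ns"
    and "v {} = 0"
    and "partition_on Ns P0"
  shows "\<not> (\<exists>f :: nat \<Rightarrow> 'a hstate.
              f 0 = (P0, \<lambda>_. {}) \<and> (\<forall>n. hedonic_move Ns v (f n) (f (Suc n))))"
proof
  assume "\<exists>f :: nat \<Rightarrow> 'a hstate.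
              f 0 = (P0, \<lambda>_. {}) \<and> (\<forall>n. hedonic_move Ns v (f n) (f (Suc n)))"
  then obtain f :: "nat \<Rightarrow> 'a hstate" where f0: "f 0 = (P0, \<lambda>_. {})"
    and fs: "\<And>n. hedonic_move Ns v (f n) (f (Suc n))" by blast
  have inv: "partition_on Ns (fst (f n))" for n
  proof (induction n)
    case 0 then show ?case using f0 assms(3) by simp
  next
    case (Suc n) then show ?case using step[OF assms(1,2) _ fs] by blast
  qed
  define g where "g n = Phi v (fst (f n))" for n
  have "g n < g (Suc n)" for n using step[OF assms(1,2) inv fs, of n] unfolding g_def by blast
  then have sm: "strict_mono g" by (simp add: strict_mono_Suc_iff)
  then have ig: "inj g" by (rule strict_mono_imp_inj_on)
  have "range g \<subseteq> Phi v ` {P. partition_on Ns P}" using inv g_def by auto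
  moreover have "finite (Phi v ` {P. partition_on Ns P})"
    using finitely_many_partition_on[OF assms(1)] by simp
  ultimately have "finite (range g)" using finite_subset by blast
  then have "finite (UNIV :: nat set)" using ig finite_imageD by blast
  then show False by simp
qed
end
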